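(* Let $S$ be a finite semigroup such that $\equiv_{\mathsf{RM}}$ is the equality relation. If the action of $S$ on a partial $S$-set $\Omega$ is faithful, then so is the action of $S$ on its semisimplification $\Omega_{ss}$. Moreover, $|\Omega_{ss}|\le|\Omega|$.
   Context: Semigroups act on the right. A regular $\mathscr J$-class is one containing an idempotent. For a regular $\mathscr J$-class $J$: $s\equiv_{\mathsf{RM},J}t$ iff for all $x\in J$, $xs\in J\iff xt\in J$, and if both lie in $J$ then $xs=xt$; $\equiv_{\mathsf{RM}}=\bigcap_J\equiv_{\mathsf{RM},J}$ over regular $J$. A partial $S$-set is a finite set $\Omega$ with a right action by partial maps; faithful means distinct elements act as distinct partial maps. The strong orbit of $\alpha$ is $\mathscr O_\alpha=\{\beta\in\Omega\mid\alpha S^1=\beta S^1\}$; it is null if $\mathscr O_\alpha S\cap\mathscr O_\alpha=\emptyset$ and transitive otherwise. The semisimplification $\Omega_{ss}$ is the set $\{\alpha\in\Omega\mid\alpha\in\alpha S\}$ (the union of transitive strong orbits) with action $\alpha\circ s=\alpha s$ if $\alpha s$ is defined and lies in $\mathscr O_\alpha$, and undefined otherwise. *)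

theory Defs
  imports Main
begin

(* A finite semigroup is modelled as a finite type of class semigroup_mult;
   the semigroup S is UNIV of that type. *)

definition ideal2 :: "'s::semigroup_mult \<Rightarrow> 's set" where
  "ideal2 s = {s} \<union> {x * s | x. True} \<union> {s * y | y. True} \<union> {x * s * y | x y. True}"

definition greenJ :: "'s::semigroup_mult \<Rightarrow> 's \<Rightarrow> bool" where
  "greenJ s t \<longleftrightarrow> ideal2 s = ideal2 t"

definition Jclass :: "'s::semigroup_mult \<Rightarrow> 's set" where
  "Jclass s = {t. greenJ s t}"

definition regular_Jclass :: "'s::semigroup_mult set \<Rightarrow> bool" where
  "regular_Jclass J \<longleftrightarrow> (\<exists>s. J = Jclass s) \<and> (\<exists>e\<in>J. e * e = e)"

definition rm_equiv_J :: "'s::semigroup_mult set \<Rightarrow> 's \<Rightarrow> 's \<Rightarrow> bool" where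
  "rm_equiv_J J s t \<longleftrightarrow>
     (\<forall>x\<in>J. (x * s \<in> J \<longleftrightarrow> x * t \<in> J) \<and> (x * s \<in> J \<and> x * t \<in> J \<longrightarrow> x * s = x * t))"

definition rm_equiv :: "'s::semigroup_mult \<Rightarrow> 's \<Rightarrow> bool" where
  "rm_equiv s t \<longleftrightarrow> (\<forall>J. regular_Jclass J \<longrightarrow> rm_equiv_J J s t)"

(* Partial right action: act \<alpha> s = Some \<beta> means \<alpha>s = \<beta>, None means undefined. *)
definition partial_S_set :: "'o set \<Rightarrow> ('o \<Rightarrow> 's::semigroup_mult \<Rightarrow> 'o option) \<Rightarrow> bool" where
  "partial_S_set \<Omega> act \<longleftrightarrow> finite \<Omega> \<and>
     (\<forall>\<alpha>\<in>\<Omega>. \<forall>s \<beta>. act \<alpha> s = Some \<beta> \<longrightarrow> \<beta> \<in> \<Omega>) \<and>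
     (\<forall>\<alpha>\<in>\<Omega>. \<forall>s t. act \<alpha> (s * t) = (case act \<alpha> s of None \<Rightarrow> None | Some \<beta> \<Rightarrow> act \<beta> t))"

definition faithful :: "'o set \<Rightarrow> ('o \<Rightarrow> 's \<Rightarrow> 'o option) \<Rightarrow> bool" where
  "faithful \<Omega> act \<longleftrightarrow> (\<forall>s t. (\<forall>\<alpha>\<in>\<Omega>. act \<alpha> s = act \<alpha> t) \<longrightarrow> s = t)"

definition orbit1 :: "('o \<Rightarrow> 's \<Rightarrow> 'o option) \<Rightarrow> 'o \<Rightarrow> 'o set" where
  "orbit1 act \<alpha> = {\<alpha>} \<union> {\<beta>. \<exists>s. act \<alpha> s = Some \<beta>}"

definition strong_orbit :: "'o set \<Rightarrow> ('o \<Rightarrow> 's \<Rightarrow> 'o option) \<Rightarrow> 'o \<Rightarrow> 'o set" where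
  "strong_orbit \<Omega> act \<alpha> = {\<beta>\<in>\<Omega>. orbit1 act \<alpha> = orbit1 act \<beta>}"

definition ss_set :: "'o set \<Rightarrow> ('o \<Rightarrow> 's \<Rightarrow> 'o option) \<Rightarrow> 'o set" where
  "ss_set \<Omega> act = {\<alpha>\<in>\<Omega>. \<exists>s. act \<alpha> s = Some \<alpha>}"

definition ss_act :: "'o set \<Rightarrow> ('o \<Rightarrow> 's \<Rightarrow> 'o option) \<Rightarrow> 'o \<Rightarrow> 's \<Rightarrow> 'o option" where
  "ss_act \<Omega> act \<alpha> s = (case act \<alpha> s of None \<Rightarrow> None
      | Some \<beta> \<Rightarrow> if \<beta> \<in> strong_orbit \<Omega> act \<alpha> then Some \<beta> else None)"

end

theory Submission
  imports Defs
begin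

fun r1 :: "'s::semigroup_mult \<Rightarrow> 's option \<Rightarrow> 's" where
  "r1 z None = z" | "r1 z (Some b) = z * b"

lemma ideal2_iff:
  "x \<in> ideal2 y \<longleftrightarrow> (\<exists>a b. x = r1 y b \<or> x = a * r1 y b)"
proof
  assume "x \<in> ideal2 y"
  then show "\<exists>a b. x = r1 y b \<or> x = a * r1 y b"
    unfolding ideal2_def
    by (auto, metis r1.simps(1), metis r1.simps(1), metis r1.simps(2), metis r1.simps(2) mult.assoc)
next
  assume "\<exists>a b. x = r1 y b \<or> x = a * r1 y b"
  then obtain a b where "x = r1 y b \<or> x = a * r1 y b" by blast
  then show "x \<in> ideal2 y" unfolding ideal2_def
    by (cases b) (auto simp: mult.assoc)
qed

lemma ideal2_self: "y \<in> ideal2 y" unfolding ideal2_def by auto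

lemma ideal2_trans: assumes "y \<in> ideal2 z" shows "ideal2 y \<subseteq> ideal2 z"
proof
  fix w assume "w \<in> ideal2 y"
  then show "w \<in> ideal2 z" using assms unfolding ideal2_def
    by (auto simp: mult.assoc) (metis mult.assoc)+
qed

lemma r1_exists:
  "\<exists>v. ((\<lambda>y. y * c) ^^ m) z = r1 z v"
proof (induction m)
  case 0 then show ?case by (metis funpow_0 r1.simps(1))
next
  case (Suc m)
  then obtain v where v: "((\<lambda>y. y * c) ^^ m) z = r1 z v" by blast
  show ?case
  proof (cases v)
    case None then show ?thesis using v by (auto intro: exI[of _ "Some c"])
  next
    case (Some w) then show ?thesis using v by (auto simp: mult.assoc intro: exI[of _ "Some (w*c)"])
  qed
qed

lemma keyA:
  fixes x s :: "'s::{semigroup_mult,finite}"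
  assumes "x \<in> ideal2 (x * s)"
  shows "\<exists>u. x = r1 (x * s) u"
proof -
  obtain a b where ab: "x = r1 (x*s) b \<or> x = a * r1 (x*s) b"
    using assms ideal2_iff by blast
  define c where "c = r1 s b"
  have xc: "x * c = r1 (x*s) b" unfolding c_def by (cases b) (auto simp: mult.assoc)
  show ?thesis
  proof (cases "x = r1 (x*s) b")
    case True then show ?thesis by blast
  next
    case False
    then have xa: "x = a * (x * c)" using ab xc by auto
    define h where "h n = ((\<lambda>y. y * c) ^^ n)" for n
    define L where "L n = ((\<lambda>y. a * y) ^^ n)" for n
    have comm: "h n (L m y) = L m (h n y)" for n m y
      unfolding h_def L_def
    proof (induction n arbitrary: y)
      case 0 then show ?case by simp
    next
      case (Suc n)
      have "((\<lambda>y. a * y) ^^ m) y * c = ((\<lambda>y. a * y) ^^ m) (y * c)" for y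
        by (induction m) (auto simp: mult.assoc)
      then show ?case using Suc by simp
    qed
    have hc: "h n y * c = h n (y * c)" for n y
      unfolding h_def by (induction n arbitrary: y) auto
    have ha: "a * h n y = h n (a * y)" for n y
      unfolding h_def by (induction n arbitrary: y) (auto simp: mult.assoc[symmetric])
    have hx: "x = L n (h n x)" for n
    proof (induction n)
      case 0 then show ?case unfolding L_def h_def by simp
    next
      case (Suc n)
      have "L (Suc n) (h (Suc n) x) = L n (a * h n (x * c))"
        unfolding L_def h_def by (simp add: funpow_Suc_right del: funpow.simps)
      also have "a * h n (x * c) = h n (a * (x * c))"
        using ha by simp
      also have "a * (x * c) = x" using xa by simp
      finally show ?case using Suc by simp
    qed
    have "\<not> inj h"
    proof
      assume "inj h"
      then have "infinite (range h)" using finite_imageD by blast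
      then show False by simp
    qed
    then obtain i j where ij: "h i = h j" "i < j"
      unfolding inj_def by (metis linorder_neqE_nat)
    define p where "p = j - i"
    have per: "h (m + k * p) = h m" if "m \<ge> i" for m k
    proof (induction k)
      case 0 then show ?case by simp
    next
      case (Suc k)
      have "h (m + Suc k * p) = h (m + k*p - i) \<circ> h (i + p)"
        unfolding h_def using that by (simp add: funpow_add[symmetric] algebra_simps)
      also have "h (i+p) = h i" using ij p_def by simp
      also have "h (m + k*p - i) \<circ> h i = h (m + k*p)"
        unfolding h_def using that by (simp add: funpow_add[symmetric])
      finally show ?case using Suc by simp
    qed
    define n where "n = (i+1)*p"
    have p1: "p \<ge> 1" using ij unfolding p_def by auto
    have "(i+1)*1 \<le> (i+1)*p" using p1 by (rule mult_le_mono2)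
    then have n1: "n \<ge> 1" "n \<ge> i" unfolding n_def by auto
    have hh: "h n (h n x) = h n x"
    proof -
      have "h n (h n x) = h (n + (i+1)*p) x" unfolding h_def
        by (metis funpow_add o_apply n_def)
      also have "\<dots> = h n x" using per[OF n1(2), of "i+1"] by simp
      finally show ?thesis .
    qed
    have "h n x = x"
    proof -
      have "h n x = h n (L n (h n x))" using hx[of n] by simp
      also have "\<dots> = L n (h n (h n x))" by (rule comm)
      also have "\<dots> = x" using hh hx[of n] by simp
      finally show ?thesis .
    qed
    moreover have "h n x = ((\<lambda>y. y * c) ^^ (n - 1)) (x * c)"
      unfolding h_def using n1(1)
      by (metis Suc_diff_le diff_Suc_1 funpow_Suc_right o_apply)
    moreover obtain v where "((\<lambda>y. y * c) ^^ (n - 1)) (x * c) = r1 (x*c) v"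
      using r1_exists by blast
    ultimately have xv: "x = r1 (r1 (x*s) b) v" using xc by simp
    show ?thesis
    proof (cases b; cases v)
      assume "b = None" "v = None" then show ?thesis using xv by (metis r1.simps(1))
    next
      fix w assume "b = None" "v = Some w" then show ?thesis using xv by (metis r1.simps)
    next
      fix w assume "b = Some w" "v = None" then show ?thesis using xv by (metis r1.simps)
    next
      fix w w' assume "b = Some w" "v = Some w'" then show ?thesis using xv
        by (metis r1.simps(2) mult.assoc)
    qed
  qed
qed

lemma comp_act:
  assumes "partial_S_set \<Omega> act" "\<alpha> \<in> \<Omega>"
  shows "act \<alpha> (s * t) = (case act \<alpha> s of None \<Rightarrow> None | Some \<beta> \<Rightarrow> act \<beta> t)"
  using assms unfolding partial_S_set_def by blast

lemma closed_act:
  assumes "partial_S_set \<Omega> act" "\<alpha> \<in> \<Omega>" "act \<alpha> s = Some \<beta>"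
  shows "\<beta> \<in> \<Omega>"
  using assms unfolding partial_S_set_def by blast

lemma in_strong_orbit:
  assumes P: "partial_S_set \<Omega> act" and d: "\<delta> \<in> \<Omega>" and g: "act \<delta> s = Some \<gamma>"
    and bk: "\<gamma> = \<delta> \<or> (\<exists>u. act \<gamma> u = Some \<delta>)"
  shows "\<gamma> \<in> strong_orbit \<Omega> act \<delta>"
proof -
  have gO: "\<gamma> \<in> \<Omega>" using closed_act[OF P d g] .
  have "orbit1 act \<gamma> \<subseteq> orbit1 act \<delta>"
  proof
    fix b assume "b \<in> orbit1 act \<gamma>"
    then have "b = \<gamma> \<or> (\<exists>r. act \<gamma> r = Some b)" unfolding orbit1_def by auto
    then show "b \<in> orbit1 act \<delta>"
    proof
      assume "b = \<gamma>" then show ?thesis using g unfolding orbit1_def by auto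
    next
      assume "\<exists>r. act \<gamma> r = Some b"
      then obtain r where "act \<gamma> r = Some b" by blast
      then have "act \<delta> (s * r) = Some b" using comp_act[OF P d] g by simp
      then show ?thesis unfolding orbit1_def by auto
    qed
  qed
  moreover have "orbit1 act \<delta> \<subseteq> orbit1 act \<gamma>"
  proof (cases "\<gamma> = \<delta>")
    case True then show ?thesis by simp
  next
    case False
    then obtain u where u: "act \<gamma> u = Some \<delta>" using bk by blast
    show ?thesis
    proof
      fix b assume "b \<in> orbit1 act \<delta>"
      then have "b = \<delta> \<or> (\<exists>r. act \<delta> r = Some b)" unfolding orbit1_def by auto
      then show "b \<in> orbit1 act \<gamma>"
      proof
        assume "b = \<delta>" then show ?thesis using u unfolding orbit1_def by auto
      next
        assume "\<exists>r. act \<delta> r = Some b"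
        then obtain r where "act \<delta> r = Some b" by blast
        then have "act \<gamma> (u * r) = Some b" using comp_act[OF P gO] u by simp
        then show ?thesis unfolding orbit1_def by auto
      qed
    qed
  qed
  ultimately show ?thesis using gO unfolding strong_orbit_def by auto
qed

lemma key_main:
  fixes act :: "'o \<Rightarrow> 's::{semigroup_mult, finite} \<Rightarrow> 'o option"
  assumes P: "partial_S_set \<Omega> act" and F: "faithful \<Omega> act"
    and H: "\<forall>\<alpha>\<in>ss_set \<Omega> act. ss_act \<Omega> act \<alpha> s = ss_act \<Omega> act \<alpha> t"
    and xs: "ideal2 x = ideal2 (x * s)"
  shows "ideal2 (x * t) = ideal2 x \<and> x * s = x * t"
proof -
  obtain u where u: "x = r1 (x * s) u" using keyA[of x s] xs ideal2_self by metis
  have pt: "act \<alpha> x = act \<alpha> (r1 (x * t) u) \<and> act \<alpha> (x * s) = act \<alpha> (x * t)"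
    if a: "\<alpha> \<in> \<Omega>" for \<alpha>
  proof (cases "act \<alpha> x")
    case None
    then show ?thesis using comp_act[OF P a] by (cases u) (auto simp: mult.assoc)
  next
    case (Some \<delta>)
    have dO: "\<delta> \<in> \<Omega>" using closed_act[OF P a Some] .
    obtain \<gamma> where g: "act \<delta> s = Some \<gamma>" and bk: "\<gamma> = \<delta> \<or> (\<exists>v. act \<gamma> v = Some \<delta>)"
      and gu: "act \<gamma> (r1 t u) = act \<delta> (r1 t u) \<or> True"
      and su: "act \<delta> (r1 s u) = Some \<delta>"
    proof (cases u)
      case None
      then have "act \<alpha> (x * s) = Some \<delta>" using u Some by simp
      then have "act \<delta> s = Some \<delta>" using comp_act[OF P a] Some by simp
      then show ?thesis using that None by auto
    next
      case (Some w)
      then have "act \<alpha> (x * (s * w)) = Some \<delta>" using u \<open>act \<alpha> x = Some \<delta>\<close> by (simp add: mult.assoc)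
      then have e: "act \<delta> (s * w) = Some \<delta>" using comp_act[OF P a] \<open>act \<alpha> x = Some \<delta>\<close> by simp
      then obtain \<gamma> where "act \<delta> s = Some \<gamma>" "act \<gamma> w = Some \<delta>"
        using comp_act[OF P dO, of s w] by (auto split: option.splits)
      then show ?thesis using that Some e by auto
    qed
    have dss: "\<delta> \<in> ss_set \<Omega> act" using su dO unfolding ss_set_def by auto
    have "\<gamma> \<in> strong_orbit \<Omega> act \<delta>" using in_strong_orbit[OF P dO g bk] .
    then have "ss_act \<Omega> act \<delta> s = Some \<gamma>" using g unfolding ss_act_def by simp
    then have "ss_act \<Omega> act \<delta> t = Some \<gamma>" using H dss by simp
    then have dt: "act \<delta> t = Some \<gamma>" unfolding ss_act_def
      by (auto split: option.splits if_splits)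
    have xt: "act \<alpha> (x * t) = Some \<gamma>" using comp_act[OF P a] Some dt by simp
    have xs': "act \<alpha> (x * s) = Some \<gamma>" using comp_act[OF P a] Some g by simp
    have "act \<alpha> (r1 (x * t) u) = Some \<delta>"
    proof (cases u)
      case None
      then have "\<gamma> = \<delta>" using su g by simp
      then show ?thesis using None xt by simp
    next
      case (Some w)
      note Sw = this
      have gO: "\<gamma> \<in> \<Omega>" using closed_act[OF P dO g] .
      have "act \<delta> (s * w) = Some \<delta>" using su Sw by simp
      then have "act \<gamma> w = Some \<delta>" using comp_act[OF P dO] g by simp
      then show ?thesis using Sw comp_act[OF P a, of "x * t" w] xt by simp
    qed
    then show ?thesis using Some xt xs' by simp
  qed
  have FF: "\<And>a b. (\<forall>\<alpha>\<in>\<Omega>. act \<alpha> a = act \<alpha> b) \<Longrightarrow> a = b"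
    using F unfolding faithful_def by blast
  have e1: "x = r1 (x * t) u" by (rule FF) (use pt in blast)
  have e2: "x * s = x * t" by (rule FF) (use pt in blast)
  have "x \<in> ideal2 (x * t)" using e1 ideal2_iff by metis
  moreover have "x * t \<in> ideal2 x" unfolding ideal2_def by auto
  ultimately have "ideal2 (x * t) = ideal2 x" using ideal2_trans by blast
  then show ?thesis using e2 by simp
qed

theorem proposition2p2:
  fixes \<Omega> :: "'o set" and act :: "'o \<Rightarrow> 's::{semigroup_mult, finite} \<Rightarrow> 'o option"
  assumes "\<forall>s t::'s. rm_equiv s t \<longrightarrow> s = t"
    and "partial_S_set \<Omega> act"
    and "faithful \<Omega> act"
  shows "faithful (ss_set \<Omega> act) (ss_act \<Omega> act) \<and> card (ss_set \<Omega> act) \<le> card \<Omega>"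
proof
  show "faithful (ss_set \<Omega> act) (ss_act \<Omega> act)"
    unfolding faithful_def
  proof (intro allI impI)
    fix s t :: 's
    assume H: "\<forall>\<alpha>\<in>ss_set \<Omega> act. ss_act \<Omega> act \<alpha> s = ss_act \<Omega> act \<alpha> t"
    then have H': "\<forall>\<alpha>\<in>ss_set \<Omega> act. ss_act \<Omega> act \<alpha> t = ss_act \<Omega> act \<alpha> s" by (metis (no_types))
    have "rm_equiv s t" unfolding rm_equiv_def
    proof (intro allI impI)
      fix J :: "'s set" assume "regular_Jclass J"
      then obtain j0 where J: "J = Jclass j0" unfolding regular_Jclass_def by blast
      show "rm_equiv_J J s t" unfolding rm_equiv_J_def
      proof
        fix x assume x: "x \<in> J"
        have x': "ideal2 j0 = ideal2 x" using x unfolding J Jclass_def greenJ_def by (simp only: mem_Collect_eq)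
        have A: "x * t \<in> J \<and> x * s = x * t" if "x * s \<in> J"
        proof -
          have "ideal2 j0 = ideal2 (x * s)" using that unfolding J Jclass_def greenJ_def by (simp only: mem_Collect_eq)
          then have "ideal2 x = ideal2 (x * s)" using x' by (metis (no_types))
          then have "ideal2 (x * t) = ideal2 x \<and> x * s = x * t"
            by (rule key_main[OF assms(2,3) H])
          then have "ideal2 j0 = ideal2 (x * t)" "x * s = x * t" using x' by auto
          then show ?thesis unfolding J Jclass_def greenJ_def by (simp only: mem_Collect_eq)
        qed
        have B: "x * s \<in> J \<and> x * t = x * s" if "x * t \<in> J"
        proof -
          have "ideal2 j0 = ideal2 (x * t)" using that unfolding J Jclass_def greenJ_def by (simp only: mem_Collect_eq)
          then have "ideal2 x = ideal2 (x * t)" using x' by (metis (no_types))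
          then have "ideal2 (x * s) = ideal2 x \<and> x * t = x * s"
            by (rule key_main[OF assms(2,3) H'])
          then have "ideal2 j0 = ideal2 (x * s)" "x * t = x * s" using x' by auto
          then show ?thesis unfolding J Jclass_def greenJ_def by (simp only: mem_Collect_eq)
        qed
        show "(x * s \<in> J) = (x * t \<in> J) \<and> (x * s \<in> J \<and> x * t \<in> J \<longrightarrow> x * s = x * t)"
          using A B by (metis (no_types))
      qed
    qed
    then show "s = t" using assms(1) by blast
  qed
next
  have "finite \<Omega>" using assms(2) unfolding partial_S_set_def by blast
  moreover have "ss_set \<Omega> act \<subseteq> \<Omega>" unfolding ss_set_def by auto
  ultimately show "card (ss_set \<Omega> act) \<le> card \<Omega>" by (rule card_mono)
qed

end
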